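(* Let $\{a_n\}_{n\ge1}$ be a sequence of positive real numbers and let $\lambda>0$. Suppose that \[ \frac{a_{2n}}{a_n}=\frac12-\frac{\beta_1}{\ln(\lambda n)}+\frac{\epsilon_1(n)}{\ln(\lambda n)},\qquad \frac{a_{2n+1}}{a_n}=\frac12-\frac{\beta_2}{\ln(\lambda n)}+\frac{\epsilon_2(n)}{\ln(\lambda n)}, \] where $\beta_1,\beta_2$ are real constants independent of $n$ and $\epsilon_1(n)\to0$, $\epsilon_2(n)\to0$ as $n\to\infty$. Let $m=\min\{\beta_1,\beta_2\}$ and $M=\max\{\beta_1,\beta_2\}$. Then: (i) if $m>\frac{\ln2}{2}$, then $\sum_{n=1}^\infty a_n$ converges; (ii) if $M<\frac{\ln2}{2}$, then $\sum_{n=1}^\infty a_n$ diverges.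
   Context: Here $\ln$ denotes the natural logarithm. *)

theory Defs
  imports "HOL-Analysis.Analysis"
begin

end

theory Submission
  imports Defs "HOL-Analysis.Analysis"
begin

lemma sum_double:
  fixes f :: "nat \<Rightarrow> real"
  shows "m \<le> n \<Longrightarrow> sum f {2*m..<2*n} = (\<Sum>i=m..<n. f (2*i) + f (2*i+1))"
proof (induction n)
  case 0 then show ?case by simp
next
  case (Suc n)
  show ?case
  proof (cases "m = Suc n")
    case True then show ?thesis by simp
  next
    case False
    then have "m \<le> n" using Suc.prems by simp
    then have "2*m \<le> 2*n" by simp
    have e: "2 * Suc n = Suc (Suc (2*n))" by simp
    show ?thesis unfolding e using Suc.IH[OF \<open>m \<le> n\<close>] \<open>m \<le> n\<close> \<open>2*m \<le> 2*n\<close>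
      by (simp add: add.commute)
  qed
qed

lemma block_sum:
  fixes a :: "nat \<Rightarrow> real"
  shows "sum a {1..<2^N} = (\<Sum>k<N. sum a {2^k..<2^(Suc k)})"
proof (induction N)
  case 0 then show ?case by simp
next
  case (Suc N)
  have "(1::nat) \<le> 2^N" by simp
  moreover have "(2::nat)^N \<le> 2^Suc N" by simp
  ultimately have "sum a {1..<2^Suc N} = sum a {1..<2^N} + sum a {2^N..<2^Suc N}"
    using sum.atLeastLessThan_concat by metis
  then show ?case using Suc.IH by simp
qed

lemma conv_lemma:
  fixes S :: "nat \<Rightarrow> real" and A B c :: real
  assumes nn: "\<And>k. S k \<ge> 0" and Bp: "B > 0" and cB: "c > B"
    and D0: "A + real k0 * B \<ge> 0"
    and rec: "\<And>k. k \<ge> k0 \<Longrightarrow> (A + real (Suc k) * B) * S (Suc k) \<le> (A + real (Suc k) * B - c) * S k"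
  shows "summable S"
proof -
  define T where "T k = (A + real k * B) * S k" for k
  have Tnn: "T k \<ge> 0" if "k \<ge> k0" for k
  proof -
    have "real k0 * B \<le> real k * B" using that Bp by (simp add: mult_right_mono)
    then show ?thesis unfolding T_def using D0 nn by simp
  qed
  have step: "(c - B) * S k \<le> T k - T (Suc k)" if "k \<ge> k0" for k
    using rec[OF that] unfolding T_def by (simp add: algebra_simps)
  have ind: "(c - B) * (\<Sum>i=k0..<N. S i) \<le> T k0 - T N" if "N \<ge> k0" for N
    using that
  proof (induction N)
    case 0 then show ?case by simp
  next
    case (Suc N)
    show ?case
    proof (cases "N \<ge> k0")
      case True
      have "(c - B) * (\<Sum>i=k0..<Suc N. S i) = (c - B) * (\<Sum>i=k0..<N. S i) + (c-B) * S N"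
        using True by (simp add: algebra_simps)
      then show ?thesis using Suc.IH[OF True] step[OF True] by linarith
    next
      case False
      then have "Suc N = k0" using Suc.prems by simp
      then show ?thesis by simp
    qed
  qed
  show ?thesis
  proof (rule summableI_nonneg_bounded[where x="(\<Sum>i<k0. S i) + T k0 / (c - B)"])
    show "0 \<le> S n" for n by (rule nn)
    fix n
    show "sum S {..<n} \<le> (\<Sum>i<k0. S i) + T k0 / (c - B)"
    proof (cases "n \<ge> k0")
      case True
      have sp: "sum S {..<n} = sum S {..<k0} + sum S {k0..<n}"
        using True by (metis atLeast0LessThan sum.atLeastLessThan_concat zero_le)
      have "(c - B) * sum S {k0..<n} \<le> T k0" using ind[OF True] Tnn[OF True] by linarith
      then have "sum S {k0..<n} \<le> T k0 / (c - B)" using cB by (simp add: field_simps)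
      then show ?thesis using sp by linarith
    next
      case False
      then have "sum S {..<n} \<le> sum S {..<k0}"
        by (intro sum_mono2) (auto simp: nn)
      moreover have "T k0 / (c - B) \<ge> 0" using Tnn[of k0] cB by simp
      ultimately show ?thesis by linarith
    qed
  qed
qed

lemma div_lemma:
  fixes S :: "nat \<Rightarrow> real" and A B c :: real
  assumes nn: "\<And>k. S k \<ge> 0" and Bp: "B > 0" and cB: "c < B"
    and D0: "A + real k0 * B > 0" and Sp: "S (Suc k0) > 0"
    and rec: "\<And>k. k \<ge> k0 \<Longrightarrow> (A + real k * B) * S (Suc k) \<ge> (A + real k * B - c) * S k"
  shows "\<not> summable S"
proof
  assume sm: "summable S"
  define U where "U k = (A + real k * B) * S (Suc k)" for k
  have mono: "U k0 \<le> U k" if "k \<ge> k0" for k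
    using that
  proof (induction k)
    case 0 then show ?case by simp
  next
    case (Suc k)
    show ?case
    proof (cases "k \<ge> k0")
      case True
      have "U k \<le> U (Suc k)"
      proof -
        have "(A + real (Suc k) * B - c) * S (Suc k) \<ge> (A + real k * B) * S (Suc k)"
          using nn[of "Suc k"] cB by (intro mult_right_mono) (auto simp: algebra_simps)
        then show ?thesis using rec[of "Suc k"] True unfolding U_def by simp
      qed
      then show ?thesis using Suc.IH[OF True] by linarith
    next
      case False then have "Suc k = k0" using Suc.prems by simp
      then show ?thesis by simp
    qed
  qed
  have U0: "U k0 > 0" unfolding U_def using D0 Sp by simp
  define C where "C = \<bar>A\<bar> + B"
  have Cp: "C > 0" unfolding C_def using Bp by simp
  have "summable (\<lambda>k. U k0 / C * inverse (real (Suc k)))"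
  proof (rule summable_comparison_test_ev[OF _ iffD2[OF summable_Suc_iff sm]])
    show "\<forall>\<^sub>F k in sequentially. norm (U k0 / C * inverse (real (Suc k))) \<le> S (Suc k)"
      unfolding eventually_sequentially
    proof (intro exI allI impI)
      fix k assume k: "k \<ge> k0"
      have Dk: "A + real k * B > 0"
      proof -
        have "real k0 * B \<le> real k * B" using k Bp by (simp add: mult_right_mono)
        then show ?thesis using D0 by linarith
      qed
      have DC: "A + real k * B \<le> C * real (Suc k)"
        unfolding C_def using Bp by (simp add: algebra_simps) (smt (verit) mult_nonneg_nonneg of_nat_0_le_iff)
      have "U k0 \<le> (A + real k * B) * S (Suc k)" using mono[OF k] unfolding U_def by simp
      also have "\<dots> \<le> C * real (Suc k) * S (Suc k)" using DC nn by (intro mult_right_mono) auto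
      finally have fin: "U k0 \<le> (C * real (Suc k)) * S (Suc k)" .
      have pos2: "C * real (Suc k) > 0" using Cp by simp
      have "U k0 / C * inverse (real (Suc k)) = U k0 / (C * real (Suc k))"
        by (simp add: field_simps)
      also have "\<dots> \<le> S (Suc k)" using fin pos2 by (subst pos_divide_le_eq) (auto simp: ac_simps)
      finally have "U k0 / C * inverse (real (Suc k)) \<le> S (Suc k)" .
      then show "norm (U k0 / C * inverse (real (Suc k))) \<le> S (Suc k)"
        using U0 Cp by simp
    qed
  qed
  then have "summable (\<lambda>k. C / U k0 * (U k0 / C * inverse (real (Suc k))))"
    by (rule summable_mult)
  moreover have "(\<lambda>k. C / U k0 * (U k0 / C * inverse (real (Suc k)))) = (\<lambda>k. inverse (real (Suc k)))"
    using U0 Cp by (auto simp: fun_eq_iff)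
  ultimately have "summable (\<lambda>k. inverse (real (Suc k)))" by (simp only:)
  then have "summable (\<lambda>k. inverse (real k))" using summable_Suc_iff by blast
  then show False using not_summable_harmonic by blast
qed


lemma pern_conv:
  fixes an x y bA bB eA eB L D c :: real
  assumes an: "an > 0" and x: "x / an = 1/2 - bA / L + eA / L" and y: "y / an = 1/2 - bB / L + eB / L"
    and L: "L > 0" "L \<le> D" and X: "bA + bB - eA - eB > c" and c: "c > 0"
  shows "D * (x + y) \<le> (D - c) * an"
proof -
  have xy: "x + y = an * (1 - (bA + bB - eA - eB) / L)"
    using x y an L by (simp add: field_simps)
  have D: "D > 0" using L by simp
  have "c / D \<le> c / L" using L c by (intro divide_left_mono) auto
  also have "c / L \<le> (bA + bB - eA - eB) / L" using X L by (intro divide_right_mono) auto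
  finally have "x + y \<le> an * (1 - c / D)" unfolding xy using an by (intro mult_left_mono) auto
  then have "D * (x + y) \<le> D * (an * (1 - c / D))" using D by (intro mult_left_mono) auto
  also have "\<dots> = (D - c) * an" using D by (simp add: field_simps)
  finally show ?thesis .
qed

lemma pern_div:
  fixes an x y bA bB eA eB L E c :: real
  assumes an: "an > 0" and x: "x / an = 1/2 - bA / L + eA / L" and y: "y / an = 1/2 - bB / L + eB / L"
    and L: "E > 0" "E \<le> L" and X: "bA + bB - eA - eB < c" and c: "c > 0"
  shows "E * (x + y) \<ge> (E - c) * an"
proof -
  have Lp: "L > 0" using L by simp
  have xy: "x + y = an * (1 - (bA + bB - eA - eB) / L)"
    using x y an Lp by (simp add: field_simps)
  have "(bA + bB - eA - eB) / L \<le> c / L" using X Lp by (intro divide_right_mono) auto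
  also have "c / L \<le> c / E" using L c by (intro divide_left_mono) auto
  finally have "x + y \<ge> an * (1 - c / E)" unfolding xy using an by (intro mult_left_mono) auto
  then have "E * (x + y) \<ge> E * (an * (1 - c / E))" using L by (intro mult_left_mono) auto
  moreover have "E * (an * (1 - c / E)) = (E - c) * an" using L by (simp add: field_simps)
  ultimately show ?thesis by simp
qed


theorem corollary2p1p1:
  fixes a :: "nat \<Rightarrow> real" and lam \<beta>1 \<beta>2 :: real
    and \<epsilon>1 \<epsilon>2 :: "nat \<Rightarrow> real"
  assumes pos: "\<And>n. n \<ge> 1 \<Longrightarrow> a n > 0"
    and lam: "lam > 0"
    and eq1: "\<forall>\<^sub>F n in sequentially.
               a (2*n) / a n = 1/2 - \<beta>1 / ln (lam * real n) + \<epsilon>1 n / ln (lam * real n)"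
    and eq2: "\<forall>\<^sub>F n in sequentially.
               a (2*n+1) / a n = 1/2 - \<beta>2 / ln (lam * real n) + \<epsilon>2 n / ln (lam * real n)"
    and lim1: "\<epsilon>1 \<longlonglongrightarrow> 0"
    and lim2: "\<epsilon>2 \<longlonglongrightarrow> 0"
  shows "(min \<beta>1 \<beta>2 > ln 2 / 2 \<longrightarrow> summable (\<lambda>n. a (Suc n)))
       \<and> (max \<beta>1 \<beta>2 < ln 2 / 2 \<longrightarrow> \<not> summable (\<lambda>n. a (Suc n)))"
proof -
  define S where "S k = sum a {2^k..<2^(Suc k)}" for k
  have Snn: "S k \<ge> 0" for k
  proof -
    have "a n \<ge> 0" if "n \<ge> 2^k" for n
    proof -
      have "(1::nat) \<le> 2^k" by simp
      then have n1: "1 \<le> n" using that by linarith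
      show ?thesis using pos[OF n1] by simp
    qed
    then show ?thesis unfolding S_def by (intro sum_nonneg) auto
  qed
  have Spos: "S k > 0" for k
  proof -
    have "(2::nat)^k \<in> {2^k..<2^(Suc k)}" by simp
    moreover have "\<forall>n\<in>{(2::nat)^k..<2^(Suc k)}. a n > 0"
    proof
      fix n assume "n \<in> {(2::nat)^k..<2^(Suc k)}"
      moreover have "(1::nat) \<le> 2^k" by simp
      ultimately have n1: "1 \<le> n" by simp
      show "a n > 0" using pos[OF n1] .
    qed
    ultimately show ?thesis unfolding S_def
      by (metis (no_types, lifting) empty_iff finite_atLeastLessThan sum_pos)
  qed
  have Ssuc: "S (Suc k) = (\<Sum>n=2^k..<2^(Suc k). a (2*n) + a (2*n+1))" for k
  proof -
    have "S (Suc k) = sum a {2*2^k..<2*2^(Suc k)}" unfolding S_def by simp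
    also have "\<dots> = (\<Sum>n=2^k..<2^(Suc k). a (2*n) + a (2*n+1))"
      by (rule sum_double) simp
    finally show ?thesis .
  qed
  have shiftsum: "(\<Sum>n<M. a (Suc n)) = sum a {1..<Suc M}" for M
    by (metis One_nat_def atLeast0LessThan sum.shift_bounds_Suc_ivl)
  have apos: "\<And>n. a (Suc n) \<ge> 0" using pos by (simp add: less_imp_le)
  have blk: "sum a {1..<2^N} = (\<Sum>k<N. S k)" for N
    unfolding S_def by (rule block_sum)
  have equiv: "summable (\<lambda>n. a (Suc n)) \<longleftrightarrow> summable S"
  proof
    assume sm: "summable (\<lambda>n. a (Suc n))"
    show "summable S"
    proof (rule summableI_nonneg_bounded[OF Snn])
      fix N
      have "(\<Sum>k<N. S k) = sum a {1..<2^N}" by (rule blk[symmetric])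
      also have "\<dots> = (\<Sum>n<2^N - 1. a (Suc n))" using shiftsum[of "2^N - 1"] by simp
      also have "\<dots> \<le> suminf (\<lambda>n. a (Suc n))" using sm apos by (intro sum_le_suminf) auto
      finally show "sum S {..<N} \<le> suminf (\<lambda>n. a (Suc n))" .
    qed
  next
    assume sm: "summable S"
    show "summable (\<lambda>n. a (Suc n))"
    proof (rule summableI_nonneg_bounded[OF apos])
      fix N
      have "(\<Sum>n<N. a (Suc n)) = sum a {1..<Suc N}" by (rule shiftsum)
      also have "\<dots> \<le> sum a {1..<2^N}"
      proof (rule sum_mono2)
        show "{1..<Suc N} \<subseteq> {1..<2^N}" using Suc_le_eq less_exp by auto
        show "\<And>b. b \<in> {1..<2 ^ N} - {1..<Suc N} \<Longrightarrow> 0 \<le> a b"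
          using pos by (auto simp: less_imp_le)
      qed simp
      also have "\<dots> = (\<Sum>k<N. S k)" by (rule blk)
      also have "\<dots> \<le> suminf S" using sm Snn by (intro sum_le_suminf) auto
      finally show "(\<Sum>n<N. a (Suc n)) \<le> suminf S" .
    qed
  qed
  have lim: "(\<lambda>n. \<epsilon>1 n + \<epsilon>2 n) \<longlonglongrightarrow> 0"
    using tendsto_add[OF lim1 lim2] by simp
  have ev_small: "\<forall>\<^sub>F n in sequentially. \<bar>\<epsilon>1 n + \<epsilon>2 n\<bar> < d" if "d > 0" for d
    using lim that unfolding tendsto_iff by (auto simp: dist_real_def)
  have ev_big: "\<forall>\<^sub>F n in sequentially. lam * real n > 1"
  proof -
    have "\<forall>\<^sub>F n in sequentially. real n > 1 / lam"
      using filterlim_real_sequentially filterlim_at_top_dense by blast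
    then show ?thesis
      by (rule eventually_mono) (use lam in \<open>simp add: field_simps\<close>)
  qed
  have ln2: "ln (2::real) > 0" by simp
  have lnpow: "ln (lam * real ((2::nat)^j)) = ln lam + real j * ln 2" for j
    using lam by (simp add: ln_mult ln_realpow)
  have nat_bound: "real (nat \<lceil>- ln lam / ln 2\<rceil>) * ln 2 \<ge> - ln lam"
  proof -
    have "real (nat \<lceil>- ln lam / ln 2\<rceil>) \<ge> - ln lam / ln 2" by linarith
    then show ?thesis using ln2 by (simp add: field_simps)
  qed
  show ?thesis
  proof (intro conjI impI)
    assume m: "min \<beta>1 \<beta>2 > ln 2 / 2"
    define \<beta> where "\<beta> = \<beta>1 + \<beta>2"
    have b: "\<beta> > ln 2" using m unfolding \<beta>_def by simp
    define c where "c = (ln 2 + \<beta>) / 2"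
    have c: "c > ln 2" "c < \<beta>" using b unfolding c_def by auto
    have cpos: "\<beta> - c > 0" using c by simp
    have "\<forall>\<^sub>F n in sequentially. (a (2*n) / a n = 1/2 - \<beta>1 / ln (lam * real n) + \<epsilon>1 n / ln (lam * real n))
       \<and> (a (2*n+1) / a n = 1/2 - \<beta>2 / ln (lam * real n) + \<epsilon>2 n / ln (lam * real n))
       \<and> \<bar>\<epsilon>1 n + \<epsilon>2 n\<bar> < \<beta> - c \<and> lam * real n > 1 \<and> n \<ge> 1"
      using eq1 eq2 ev_small[of "\<beta> - c", OF cpos] ev_big eventually_ge_at_top[of 1]
      by eventually_elim auto
    then obtain N0 where N0: "\<And>n. n \<ge> N0 \<Longrightarrow> (a (2*n) / a n = 1/2 - \<beta>1 / ln (lam * real n) + \<epsilon>1 n / ln (lam * real n))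
       \<and> (a (2*n+1) / a n = 1/2 - \<beta>2 / ln (lam * real n) + \<epsilon>2 n / ln (lam * real n))
       \<and> \<bar>\<epsilon>1 n + \<epsilon>2 n\<bar> < \<beta> - c \<and> lam * real n > 1 \<and> n \<ge> 1"
      unfolding eventually_sequentially by blast
    define k0 where "k0 = N0 + nat \<lceil>- ln lam / ln 2\<rceil>"
    have D0: "ln lam + real k0 * ln 2 \<ge> 0"
    proof -
      have "real N0 * ln 2 \<ge> 0" using ln2 by simp
      moreover have "real k0 * ln 2 = real N0 * ln 2 + real (nat \<lceil>- ln lam / ln 2\<rceil>) * ln 2"
        unfolding k0_def by (simp add: algebra_simps)
      ultimately show ?thesis using nat_bound ln2 by linarith
    qed
    have "summable S"
    proof (rule conv_lemma[OF Snn ln2 c(1) D0])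
      fix k assume k: "k0 \<le> k"
      define D where "D = ln lam + real (Suc k) * ln 2"
      have Dp: "D > 0"
      proof -
        have "real k0 * ln 2 \<le> real k * ln 2" using k ln2 by (intro mult_right_mono) auto
        moreover have "real (Suc k) * ln 2 = real k * ln 2 + ln 2" by (simp add: algebra_simps)
        ultimately show ?thesis using D0 ln2 unfolding D_def by linarith
      qed
      have each: "D * (a (2*n) + a (2*n+1)) \<le> (D - c) * a n" if n: "n \<in> {2^k..<2^Suc k}" for n
      proof -
        have "N0 \<le> k0" unfolding k0_def by simp
        also have "k0 \<le> k" by (rule k)
        also have "k < 2^k" by (rule less_exp)
        also have "2^k \<le> n" using n by simp
        finally have nN: "N0 \<le> n" by simp
        note H = N0[OF nN]
        have Lp: "ln (lam * real n) > 0" using H by simp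
        have "n \<le> (2::nat)^Suc k" using n by simp
        then have "real n \<le> real ((2::nat)^Suc k)" by (rule of_nat_mono)
        then have "lam * real n \<le> lam * real ((2::nat)^Suc k)" using lam by (intro mult_left_mono) auto
        moreover have "lam * real n > 0" using H by simp
        ultimately have "ln (lam * real n) \<le> ln (lam * real ((2::nat)^Suc k))"
          by (intro ln_mono) auto
        then have LD: "ln (lam * real n) \<le> D" unfolding D_def lnpow .
        show ?thesis
        proof (rule pern_conv[where bA=\<beta>1 and bB=\<beta>2 and eA="\<epsilon>1 n" and eB="\<epsilon>2 n"])
          show "a n > 0" using H pos by simp
          show "a (2*n) / a n = 1/2 - \<beta>1 / ln (lam * real n) + \<epsilon>1 n / ln (lam * real n)" using H by simp
          show "a (2*n+1) / a n = 1/2 - \<beta>2 / ln (lam * real n) + \<epsilon>2 n / ln (lam * real n)" using H by simp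
          show "ln (lam * real n) > 0" by (rule Lp)
          show "ln (lam * real n) \<le> D" by (rule LD)
          show "\<beta>1 + \<beta>2 - \<epsilon>1 n - \<epsilon>2 n > c" using H unfolding \<beta>_def by linarith
          show "c > 0" using c ln2 by linarith
        qed
      qed
      have "D * S (Suc k) = (\<Sum>n=2^k..<2^(Suc k). D * (a (2*n) + a (2*n+1)))"
        unfolding Ssuc by (simp add: sum_distrib_left)
      also have "\<dots> \<le> (\<Sum>n=2^k..<2^(Suc k). (D - c) * a n)" by (rule sum_mono) (rule each)
      also have "\<dots> = (D - c) * S k" unfolding S_def by (simp add: sum_distrib_left)
      finally show "(ln lam + real (Suc k) * ln 2) * S (Suc k) \<le> (ln lam + real (Suc k) * ln 2 - c) * S k"
        unfolding D_def .
    qed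
    then show "summable (\<lambda>n. a (Suc n))" using equiv by simp
  next
    assume M: "max \<beta>1 \<beta>2 < ln 2 / 2"
    define \<beta> where "\<beta> = \<beta>1 + \<beta>2"
    have b: "\<beta> < ln 2" using M unfolding \<beta>_def by simp
    define mb where "mb = max \<beta> 0"
    define c where "c = (ln 2 + mb) / 2"
    have mx: "mb \<ge> 0" "mb \<ge> \<beta>" unfolding mb_def by auto
    have mx2: "mb < ln 2" unfolding mb_def using b ln2 by (simp only: max_less_iff_conj)
    have c1: "c < ln 2" using b ln2 mx mx2 unfolding c_def by simp
    have c2: "c > \<beta>" using b ln2 mx mx2 unfolding c_def by simp
    have c3: "c > 0" using b ln2 mx mx2 unfolding c_def by simp
    note c = c1 c2 c3
    have cpos: "c - \<beta> > 0" using c by simp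
    have "\<forall>\<^sub>F n in sequentially. (a (2*n) / a n = 1/2 - \<beta>1 / ln (lam * real n) + \<epsilon>1 n / ln (lam * real n))
       \<and> (a (2*n+1) / a n = 1/2 - \<beta>2 / ln (lam * real n) + \<epsilon>2 n / ln (lam * real n))
       \<and> \<bar>\<epsilon>1 n + \<epsilon>2 n\<bar> < c - \<beta> \<and> n \<ge> 1"
      using eq1 eq2 ev_small[of "c - \<beta>", OF cpos] eventually_ge_at_top[of 1]
      by eventually_elim auto
    then obtain N0 where N0: "\<And>n. n \<ge> N0 \<Longrightarrow> (a (2*n) / a n = 1/2 - \<beta>1 / ln (lam * real n) + \<epsilon>1 n / ln (lam * real n))
       \<and> (a (2*n+1) / a n = 1/2 - \<beta>2 / ln (lam * real n) + \<epsilon>2 n / ln (lam * real n))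
       \<and> \<bar>\<epsilon>1 n + \<epsilon>2 n\<bar> < c - \<beta> \<and> n \<ge> 1"
      unfolding eventually_sequentially by blast
    define k0 where "k0 = N0 + nat \<lceil>- ln lam / ln 2\<rceil> + 1"
    have D0: "ln lam + real k0 * ln 2 > 0"
    proof -
      have "real N0 * ln 2 \<ge> 0" using ln2 by simp
      moreover have "real k0 * ln 2 = real N0 * ln 2 + real (nat \<lceil>- ln lam / ln 2\<rceil>) * ln 2 + ln 2"
        unfolding k0_def by (simp add: algebra_simps)
      ultimately show ?thesis using nat_bound ln2 by linarith
    qed
    have "\<not> summable S"
    proof (rule div_lemma[OF Snn ln2 c(1) D0 Spos])
      fix k assume k: "k0 \<le> k"
      define E where "E = ln lam + real k * ln 2"
      have Ep: "E > 0"
      proof -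
        have "real k0 * ln 2 \<le> real k * ln 2" using k ln2 by (intro mult_right_mono) auto
        then show ?thesis using D0 unfolding E_def by linarith
      qed
      have each: "E * (a (2*n) + a (2*n+1)) \<ge> (E - c) * a n" if n: "n \<in> {2^k..<2^Suc k}" for n
      proof -
        have "N0 \<le> k0" unfolding k0_def by simp
        also have "k0 \<le> k" by (rule k)
        also have "k < 2^k" by (rule less_exp)
        also have "2^k \<le> n" using n by simp
        finally have nN: "N0 \<le> n" by simp
        note H = N0[OF nN]
        have "(2::nat)^k \<le> n" using n by simp
        then have "real ((2::nat)^k) \<le> real n" by (rule of_nat_mono)
        then have "lam * real ((2::nat)^k) \<le> lam * real n" using lam by (intro mult_left_mono) auto
        moreover have "lam * real ((2::nat)^k) > 0" using lam by simp
        ultimately have "ln (lam * real ((2::nat)^k)) \<le> ln (lam * real n)"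
          by (intro ln_mono) auto
        then have LE: "E \<le> ln (lam * real n)" unfolding E_def lnpow .
        show ?thesis
        proof (rule pern_div[where bA=\<beta>1 and bB=\<beta>2 and eA="\<epsilon>1 n" and eB="\<epsilon>2 n"])
          show "a n > 0" using H pos by simp
          show "a (2*n) / a n = 1/2 - \<beta>1 / ln (lam * real n) + \<epsilon>1 n / ln (lam * real n)" using H by simp
          show "a (2*n+1) / a n = 1/2 - \<beta>2 / ln (lam * real n) + \<epsilon>2 n / ln (lam * real n)" using H by simp
          show "E > 0" by (rule Ep)
          show "E \<le> ln (lam * real n)" by (rule LE)
          show "\<beta>1 + \<beta>2 - \<epsilon>1 n - \<epsilon>2 n < c" using H unfolding \<beta>_def by linarith
          show "c > 0" by (rule c(3))
        qed
      qed
      have "(E - c) * S k = (\<Sum>n=2^k..<2^(Suc k). (E - c) * a n)"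
        unfolding S_def by (simp add: sum_distrib_left)
      also have "\<dots> \<le> (\<Sum>n=2^k..<2^(Suc k). E * (a (2*n) + a (2*n+1)))" by (rule sum_mono) (rule each)
      also have "\<dots> = E * S (Suc k)" unfolding Ssuc by (simp add: sum_distrib_left)
      finally show "(ln lam + real k * ln 2) * S (Suc k) \<ge> (ln lam + real k * ln 2 - c) * S k"
        unfolding E_def .
    qed
    then show "\<not> summable (\<lambda>n. a (Suc n))" using equiv by simp
  qed
qed

end
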